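(* Let $T=(V,E)$ be a finite rooted tree, $\Pr$ a probability distribution over a finite set of queries, $R\subseteq V$, and $u\in V\setminus R$. Let $\mathrm{hsd}(u,R)=\{v\in T(u)\cap R:\ \mathrm{path}(v,u)\cap R=\emptyset\}$ and let $\mathrm{lsa}(u,R)\in A(u)\cup\{\epsilon\}$ be the lowest proper ancestor of $u$ in $R$ ($\epsilon$ if none). Then the marginal benefit $\Delta(u\mid R)=B(R\cup\{u\})-B(R)$ satisfies $$\Delta(u\mid R)=\mathbb{E}[I(u,\mathrm{lsa}(u,R))]\Big(C(u)-\sum_{v\in\mathrm{hsd}(u,R)}C(v)\Big).$$
   Context: $T=(V,E)$ is a finite rooted tree; $T(u)$ is the set of nodes of the subtree rooted at $u$ (including $u$); $A(u)$ the set of proper ancestors of $u$; for a node $v\in T(u)$, $v\ne u$, $\mathrm{path}(v,u)$ is the set of nodes strictly between $v$ and $u$. Each non-leaf node is associated with a variable of a finite set $X$; $\mathrm{vars}(u)$ is the set of variables of nodes of $T(u)$; each query $q$ determines $Z_q\subseteq X$. For $S\subseteq V$, $w\in V$: $I_q(w,S)=1$ iff $w\in S$, $\mathrm{vars}(w)\subseteq Z_q$, and no $x\in A(w)\cap S$ has $\mathrm{vars}(x)\subseteq Z_q$; else $0$; $\mathbb{E}[I(w,S)]=\sum_q\Pr(q)I_q(w,S)$. Nodes have partial costs $c(x)$ and total costs $C(w)=\sum_{x\in T(w)}c(x)$. Benefit $B(S)=\sum_{w\in S}\mathbb{E}[I(w,S)]C(w)$. Notation: for $a\in A(u)$, $\mathbb{E}[I(u,a)]:=\mathbb{E}[I(u,\{u,a\})]$,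 and $\mathbb{E}[I(u,\epsilon)]:=\mathbb{E}[I(u,\{u\})]$. *)

theory Defs
  imports Complex_Main
begin

text \<open>A finite rooted tree on node set V with root r, given by a parent function par
  (the value par r is irrelevant). Every node reaches the root by iterating par.\<close>
definition rooted_tree :: "'a set \<Rightarrow> ('a \<Rightarrow> 'a) \<Rightarrow> 'a \<Rightarrow> bool" where
  "rooted_tree V par r \<longleftrightarrow> finite V \<and> r \<in> V \<and> (\<forall>v\<in>V. v \<noteq> r \<longrightarrow> par v \<in> V)
     \<and> (\<forall>v\<in>V. \<exists>n. (par ^^ n) v = r)"

definition depth :: "('a \<Rightarrow> 'a) \<Rightarrow> 'a \<Rightarrow> 'a \<Rightarrow> nat" where
  "depth par r v = (LEAST n. (par ^^ n) v = r)"

definition ancestors :: "('a \<Rightarrow> 'a) \<Rightarrow> 'a \<Rightarrow> 'a \<Rightarrow> 'a set" where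
  "ancestors par r u = {(par ^^ k) u | k. 0 < k \<and> k \<le> depth par r u}"

definition subtree :: "'a set \<Rightarrow> ('a \<Rightarrow> 'a) \<Rightarrow> 'a \<Rightarrow> 'a \<Rightarrow> 'a set" where
  "subtree V par r u = {v \<in> V. v = u \<or> u \<in> ancestors par r v}"

text \<open>path(v,u): nodes strictly between v and u (for v in T(u), v different from u).\<close>
definition tpath :: "'a set \<Rightarrow> ('a \<Rightarrow> 'a) \<Rightarrow> 'a \<Rightarrow> 'a \<Rightarrow> 'a \<Rightarrow> 'a set" where
  "tpath V par r v u = (ancestors par r v \<inter> subtree V par r u) - {u}"

definition is_leaf :: "'a set \<Rightarrow> ('a \<Rightarrow> 'a) \<Rightarrow> 'a \<Rightarrow> 'a \<Rightarrow> bool" where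
  "is_leaf V par r x \<longleftrightarrow> \<not> (\<exists>y\<in>V. y \<noteq> r \<and> par y = x)"

definition vars :: "'a set \<Rightarrow> ('a \<Rightarrow> 'a) \<Rightarrow> 'a \<Rightarrow> ('a \<Rightarrow> 'x) \<Rightarrow> 'a \<Rightarrow> 'x set" where
  "vars V par r var u = var ` {x \<in> subtree V par r u. \<not> is_leaf V par r x}"

definition Iq :: "'a set \<Rightarrow> ('a \<Rightarrow> 'a) \<Rightarrow> 'a \<Rightarrow> ('a \<Rightarrow> 'x) \<Rightarrow> 'x set \<Rightarrow> 'a \<Rightarrow> 'a set \<Rightarrow> real" where
  "Iq V par r var Zq w S =
     (if w \<in> S \<and> vars V par r var w \<subseteq> Zq
         \<and> \<not> (\<exists>x\<in>ancestors par r w \<inter> S. vars V par r var x \<subseteq> Zq) then 1 else 0)"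

definition EI :: "'a set \<Rightarrow> ('a \<Rightarrow> 'a) \<Rightarrow> 'a \<Rightarrow> ('a \<Rightarrow> 'x) \<Rightarrow> 'q set \<Rightarrow> ('q \<Rightarrow> real)
     \<Rightarrow> ('q \<Rightarrow> 'x set) \<Rightarrow> 'a \<Rightarrow> 'a set \<Rightarrow> real" where
  "EI V par r var Q Pr Z w S = (\<Sum>q\<in>Q. Pr q * Iq V par r var (Z q) w S)"

definition Ctot :: "'a set \<Rightarrow> ('a \<Rightarrow> 'a) \<Rightarrow> 'a \<Rightarrow> ('a \<Rightarrow> real) \<Rightarrow> 'a \<Rightarrow> real" where
  "Ctot V par r c w = (\<Sum>x\<in>subtree V par r w. c x)"

definition benefit :: "'a set \<Rightarrow> ('a \<Rightarrow> 'a) \<Rightarrow> 'a \<Rightarrow> ('a \<Rightarrow> 'x) \<Rightarrow> 'q set \<Rightarrow> ('q \<Rightarrow> real)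
     \<Rightarrow> ('q \<Rightarrow> 'x set) \<Rightarrow> ('a \<Rightarrow> real) \<Rightarrow> 'a set \<Rightarrow> real" where
  "benefit V par r var Q Pr Z c S =
     (\<Sum>w\<in>S. EI V par r var Q Pr Z w S * Ctot V par r c w)"

definition hsd :: "'a set \<Rightarrow> ('a \<Rightarrow> 'a) \<Rightarrow> 'a \<Rightarrow> 'a \<Rightarrow> 'a set \<Rightarrow> 'a set" where
  "hsd V par r u R = {v \<in> subtree V par r u \<inter> R. tpath V par r v u \<inter> R = {}}"

text \<open>lsa(u,R): the lowest proper ancestor of u lying in R; None encodes epsilon.\<close>
definition lsa :: "('a \<Rightarrow> 'a) \<Rightarrow> 'a \<Rightarrow> 'a \<Rightarrow> 'a set \<Rightarrow> 'a option" where
  "lsa par r u R =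
     (if ancestors par r u \<inter> R = {} then None
      else Some (THE a. a \<in> ancestors par r u \<inter> R \<and>
                   (\<forall>b\<in>ancestors par r u \<inter> R. b = a \<or> b \<in> ancestors par r a)))"

text \<open>E[I(u,a)] = E[I(u,{u,a})] and E[I(u,epsilon)] = E[I(u,{u})].\<close>
definition EI_lsa :: "'a set \<Rightarrow> ('a \<Rightarrow> 'a) \<Rightarrow> 'a \<Rightarrow> ('a \<Rightarrow> 'x) \<Rightarrow> 'q set \<Rightarrow> ('q \<Rightarrow> real)
     \<Rightarrow> ('q \<Rightarrow> 'x set) \<Rightarrow> 'a \<Rightarrow> 'a option \<Rightarrow> real" where
  "EI_lsa V par r var Q Pr Z u a =
     (case a of None \<Rightarrow> EI V par r var Q Pr Z u {u}
              | Some b \<Rightarrow> EI V par r var Q Pr Z u {u, b})"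

end

theory Submission
  imports Defs
begin

lemma rt_reach:
  assumes "rooted_tree V par r" "v \<in> V"
  shows "(par ^^ depth par r v) v = r"
  using assms unfolding rooted_tree_def depth_def by (metis (mono_tags, lifting) LeastI_ex)

lemma rt_less:
  assumes "n < depth par r v"
  shows "(par ^^ n) v \<noteq> r"
  using assms unfolding depth_def using not_less_Least by blast

lemma depth_iter:
  assumes "rooted_tree V par r" "v \<in> V" "k \<le> depth par r v"
  shows "depth par r ((par ^^ k) v) = depth par r v - k"
proof -
  let ?m = "depth par r v - k"
  have e: "(par ^^ ?m) ((par ^^ k) v) = (par ^^ (?m + k)) v" by (simp add: funpow_add)
  have P: "(par ^^ ?m) ((par ^^ k) v) = r" using e assms rt_reach[OF assms(1,2)] by simp
  have Q: "?m \<le> n" if "(par ^^ n) ((par ^^ k) v) = r" for n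
  proof (rule ccontr)
    assume "\<not> ?m \<le> n"
    hence "n + k < depth par r v" by simp
    moreover have "(par ^^ (n + k)) v = r" using that by (simp add: funpow_add)
    ultimately show False using rt_less by metis
  qed
  show ?thesis unfolding depth_def[of par r "(par ^^ k) v"]
    by (rule Least_equality) (use P Q in auto)
qed

lemma iter_V:
  assumes "rooted_tree V par r" "v \<in> V"
  shows "k \<le> depth par r v \<Longrightarrow> (par ^^ k) v \<in> V"
proof (induction k)
  case 0 then show ?case using assms by simp
next
  case (Suc k)
  hence "(par ^^ k) v \<in> V" by simp
  moreover have "(par ^^ k) v \<noteq> r" using Suc.prems rt_less by (metis Suc_le_lessD)
  ultimately show ?case using assms(1) unfolding rooted_tree_def by simp
qed

lemma anc_V:
  assumes "rooted_tree V par r" "v \<in> V" "x \<in> ancestors par r v"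
  shows "x \<in> V \<and> depth par r x < depth par r v"
proof -
  obtain k where k: "0 < k" "k \<le> depth par r v" "x = (par ^^ k) v"
    using assms(3) unfolding ancestors_def by blast
  show ?thesis using k iter_V[OF assms(1,2)] depth_iter[OF assms(1,2)] by auto
qed

lemma anc_trans:
  assumes "rooted_tree V par r" "v \<in> V" "x \<in> ancestors par r v" "y \<in> ancestors par r x"
  shows "y \<in> ancestors par r v"
proof -
  obtain k where k: "0 < k" "k \<le> depth par r v" "x = (par ^^ k) v"
    using assms(3) unfolding ancestors_def by blast
  obtain j where j: "0 < j" "j \<le> depth par r x" "y = (par ^^ j) x"
    using assms(4) unfolding ancestors_def by blast
  have "depth par r x = depth par r v - k" using k depth_iter[OF assms(1,2)] by simp
  moreover have "y = (par ^^ (j + k)) v" using j k by (simp add: funpow_add)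
  ultimately show ?thesis unfolding ancestors_def using j k by (intro CollectI exI[of _ "j+k"]) auto
qed

lemma anc_irrefl:
  assumes "rooted_tree V par r" "v \<in> V"
  shows "v \<notin> ancestors par r v"
  using anc_V[OF assms] by blast

lemma anc_chain:
  assumes "rooted_tree V par r" "v \<in> V" "x \<in> ancestors par r v" "y \<in> ancestors par r v"
  shows "x = y \<or> x \<in> ancestors par r y \<or> y \<in> ancestors par r x"
proof -
  have gen: "b \<in> ancestors par r a"
    if "0 < i" "i < j" "j \<le> depth par r v" "a = (par ^^ i) v" "b = (par ^^ j) v" for i j a b
  proof -
    have "depth par r a = depth par r v - i" using that depth_iter[OF assms(1,2)] by simp
    moreover have "b = (par ^^ (j - i)) a"
    proof -
      have "(par ^^ (j - i)) a = (par ^^ ((j - i) + i)) v" by (simp only: that(4) funpow_add o_apply)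
      also have "(j - i) + i = j" using that by simp
      finally show ?thesis using that by simp
    qed
    ultimately show ?thesis unfolding ancestors_def using that
      by (intro CollectI exI[of _ "j-i"]) auto
  qed
  obtain k where k: "0 < k" "k \<le> depth par r v" "x = (par ^^ k) v"
    using assms(3) unfolding ancestors_def by blast
  obtain j where j: "0 < j" "j \<le> depth par r v" "y = (par ^^ j) v"
    using assms(4) unfolding ancestors_def by blast
  show ?thesis
  proof (cases k j rule: linorder_cases)
    case less then show ?thesis using gen[of k j x y] k j by blast
  next
    case equal then show ?thesis using k j by simp
  next
    case greater then show ?thesis using gen[of j k y x] k j by blast
  qed
qed

lemma subtree_mono:
  assumes "rooted_tree V par r" "w \<in> subtree V par r u"
  shows "subtree V par r w \<subseteq> subtree V par r u"
  using assms anc_trans[OF assms(1)] unfolding subtree_def by blast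

lemma vars_mono:
  assumes "rooted_tree V par r" "w \<in> subtree V par r u"
  shows "vars V par r var w \<subseteq> vars V par r var u"
  using subtree_mono[OF assms] unfolding vars_def by blast


definition PP where
  "PP V par r var R u Zq \<longleftrightarrow> vars V par r var u \<subseteq> Zq \<and>
     \<not> (\<exists>x\<in>ancestors par r u \<inter> R. vars V par r var x \<subseteq> Zq)"

lemma Iq_u:
  assumes "rooted_tree V par r" "u \<in> V" "u \<notin> R"
  shows "Iq V par r var Zq u (R \<union> {u}) = (if PP V par r var R u Zq then 1 else 0)"
proof -
  have "ancestors par r u \<inter> (R \<union> {u}) = ancestors par r u \<inter> R"
    using anc_irrefl[OF assms(1,2)] by blast
  then show ?thesis unfolding Iq_def PP_def by simp
qed

lemma Iq_w:
  assumes rt: "rooted_tree V par r" and RV: "R \<subseteq> V" and u: "u \<in> V" "u \<notin> R" and w: "w \<in> R"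
  shows "Iq V par r var Zq w (R \<union> {u}) - Iq V par r var Zq w R
     = - (if PP V par r var R u Zq \<and> w \<in> hsd V par r u R then 1 else 0)"
proof (cases "u \<in> ancestors par r w")
  case False
  have "ancestors par r w \<inter> (R \<union> {u}) = ancestors par r w \<inter> R" using False by blast
  moreover have "w \<notin> hsd V par r u R" using False w u unfolding hsd_def subtree_def by auto
  ultimately show ?thesis unfolding Iq_def using w by simp
next
  case True
  have wV: "w \<in> V" using w RV by blast
  have wT: "w \<in> subtree V par r u" using True wV unfolding subtree_def by blast
  have eq: "ancestors par r w \<inter> (R \<union> {u}) = insert u (ancestors par r w \<inter> R)" using True by blast
  let ?cov = "\<lambda>x. vars V par r var x \<subseteq> Zq"
  have key: "(Iq V par r var Zq w R = 1 \<and> ?cov u) \<longleftrightarrow> (PP V par r var R u Zq \<and> w \<in> hsd V par r u R)"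
  proof
    assume A: "Iq V par r var Zq w R = 1 \<and> ?cov u"
    hence I: "?cov w" "\<not> (\<exists>x\<in>ancestors par r w \<inter> R. ?cov x)"
      unfolding Iq_def by (auto split: if_splits)
    have "\<not> (\<exists>x\<in>ancestors par r u \<inter> R. ?cov x)"
      using I(2) anc_trans[OF rt wV True] by blast
    hence P: "PP V par r var R u Zq" using A unfolding PP_def by blast
    have "tpath V par r w u \<inter> R = {}"
    proof (rule ccontr)
      assume "tpath V par r w u \<inter> R \<noteq> {}"
      then obtain x where x: "x \<in> ancestors par r w" "x \<in> subtree V par r u" "x \<in> R"
        unfolding tpath_def by blast
      have "?cov x" using order_trans[OF vars_mono[OF rt x(2)], of var Zq] A by simp
      then show False using I(2) x by blast
    qed
    then show "PP V par r var R u Zq \<and> w \<in> hsd V par r u R" using P wT w unfolding hsd_def by blast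
  next
    assume B: "PP V par r var R u Zq \<and> w \<in> hsd V par r u R"
    have cu: "?cov u" using B unfolding PP_def by blast
    have cw: "?cov w" using order_trans[OF vars_mono[OF rt wT] cu] .
    have "\<not> (\<exists>x\<in>ancestors par r w \<inter> R. ?cov x)"
    proof
      assume "\<exists>x\<in>ancestors par r w \<inter> R. ?cov x"
      then obtain x where x: "x \<in> ancestors par r w" "x \<in> R" "?cov x" by blast
      from anc_chain[OF rt wV x(1) True] show False
      proof (elim disjE)
        assume "x = u" then show False using x u by blast
      next
        assume xu: "x \<in> ancestors par r u"
        then show False using B x unfolding PP_def by blast
      next
        assume "u \<in> ancestors par r x"
        hence "x \<in> subtree V par r u" using x RV unfolding subtree_def by blast
        hence "x \<in> tpath V par r w u" using x u unfolding tpath_def by blast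
        then show False using B x unfolding hsd_def by blast
      qed
    qed
    then show "Iq V par r var Zq w R = 1 \<and> ?cov u" using cu cw w unfolding Iq_def by simp
  qed
  show ?thesis
  proof (cases "PP V par r var R u Zq \<and> w \<in> hsd V par r u R")
    case T: True
    hence "Iq V par r var Zq w R = 1" "?cov u" using key by blast+
    moreover have "Iq V par r var Zq w (R \<union> {u}) = 0" using \<open>?cov u\<close> eq unfolding Iq_def by auto
    ultimately show ?thesis using T by simp
  next
    case F: False
    hence "Iq V par r var Zq w R = 0 \<or> \<not> ?cov u" using key unfolding Iq_def by auto
    then show ?thesis
    proof
      assume "Iq V par r var Zq w R = 0"
      moreover have "Iq V par r var Zq w (R \<union> {u}) \<le> Iq V par r var Zq w R"
        using eq w unfolding Iq_def by auto
      moreover have "Iq V par r var Zq w (R \<union> {u}) \<ge> 0" unfolding Iq_def by auto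
      ultimately show ?thesis using F by simp
    next
      assume "\<not> ?cov u"
      then show ?thesis using F eq w unfolding Iq_def by auto
    qed
  qed
qed

lemma lsa_prop:
  assumes rt: "rooted_tree V par r" and u: "u \<in> V" and ne: "ancestors par r u \<inter> R \<noteq> {}"
  shows "\<exists>a. lsa par r u R = Some a \<and> a \<in> ancestors par r u \<inter> R \<and>
     (\<forall>b\<in>ancestors par r u \<inter> R. b = a \<or> b \<in> ancestors par r a)"
proof -
  let ?A = "ancestors par r u \<inter> R"
  have fin: "finite ?A"
  proof -
    have "?A \<subseteq> V" using anc_V[OF rt u] by blast
    then show ?thesis using rt unfolding rooted_tree_def using finite_subset by blast
  qed
  obtain a where a: "a \<in> ?A" "\<forall>b\<in>?A. depth par r b \<le> depth par r a"
  proof -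
    have "Max (depth par r ` ?A) \<in> depth par r ` ?A" using fin ne by (intro Max_in) auto
    then obtain a where "a \<in> ?A" "depth par r a = Max (depth par r ` ?A)" by auto
    moreover have "\<forall>b\<in>?A. depth par r b \<le> Max (depth par r ` ?A)" using fin by auto
    ultimately show ?thesis using that[of a] by simp
  qed
  have pa: "\<forall>b\<in>?A. b = a \<or> b \<in> ancestors par r a"
  proof
    fix b assume b: "b \<in> ?A"
    from anc_chain[OF rt u _ _, of b a] b a(1)
    have "b = a \<or> b \<in> ancestors par r a \<or> a \<in> ancestors par r b" by blast
    moreover have "a \<notin> ancestors par r b"
    proof
      assume "a \<in> ancestors par r b"
      moreover have "b \<in> V" using anc_V[OF rt u] b by blast
      ultimately have "depth par r a < depth par r b" using anc_V[OF rt] by blast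
      then show False using a(2) b by force
    qed
    ultimately show "b = a \<or> b \<in> ancestors par r a" by blast
  qed
  have aV: "a \<in> V" using anc_V[OF rt u] a(1) by blast
  have uniq: "a' = a" if "a' \<in> ?A \<and> (\<forall>b\<in>?A. b = a' \<or> b \<in> ancestors par r a')" for a'
  proof (rule ccontr)
    assume neq: "a' \<noteq> a"
    have a'V: "a' \<in> V" using anc_V[OF rt u] that by blast
    have "a' \<in> ancestors par r a" using pa that neq by blast
    moreover have "a \<in> ancestors par r a'" using that a(1) neq by metis
    ultimately show False using anc_V[OF rt aV] anc_V[OF rt a'V] by force
  qed
  have "(THE a. a \<in> ?A \<and> (\<forall>b\<in>?A. b = a \<or> b \<in> ancestors par r a)) = a"
    by (rule the_equality) (use a(1) pa uniq in auto)
  then show ?thesis using ne a(1) pa unfolding lsa_def by auto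
qed

lemma EI_lsa_eq:
  assumes rt: "rooted_tree V par r" and RV: "R \<subseteq> V" and u: "u \<in> V" "u \<notin> R"
  shows "EI_lsa V par r var Q Pr Z u (lsa par r u R)
       = (\<Sum>q\<in>Q. Pr q * (if PP V par r var R u (Z q) then 1 else 0))"
proof (cases "ancestors par r u \<inter> R = {}")
  case True
  hence "lsa par r u R = None" unfolding lsa_def by simp
  moreover have "ancestors par r u \<inter> {u} = {}" using anc_irrefl[OF rt u(1)] by blast
  ultimately have "Iq V par r var Zq u {u} = (if PP V par r var R u Zq then 1 else 0)" for Zq
    using True unfolding Iq_def PP_def by simp
  then show ?thesis using \<open>lsa par r u R = None\<close> unfolding EI_lsa_def EI_def by simp
next
  case False
  then obtain a where a: "lsa par r u R = Some a" "a \<in> ancestors par r u \<inter> R"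
     "\<forall>b\<in>ancestors par r u \<inter> R. b = a \<or> b \<in> ancestors par r a"
    using lsa_prop[OF rt u(1)] by blast
  have eq: "ancestors par r u \<inter> {u, a} = {a}" using a(2) anc_irrefl[OF rt u(1)] by blast
  have aV: "a \<in> V" using a(2) RV by blast
  have "Iq V par r var Zq u {u, a} = (if PP V par r var R u Zq then 1 else 0)" for Zq
  proof -
    have "(vars V par r var u \<subseteq> Zq \<and> \<not> vars V par r var a \<subseteq> Zq) \<longleftrightarrow> PP V par r var R u Zq"
    proof
      assume A: "vars V par r var u \<subseteq> Zq \<and> \<not> vars V par r var a \<subseteq> Zq"
      have "\<not> vars V par r var x \<subseteq> Zq" if x: "x \<in> ancestors par r u \<inter> R" for x
      proof (cases "x = a")
        case True then show ?thesis using A by simp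
      next
        case False
        hence "x \<in> ancestors par r a" using a(3) x by blast
        hence "a \<in> subtree V par r x" using aV unfolding subtree_def by blast
        then have "vars V par r var a \<subseteq> vars V par r var x" by (rule vars_mono[OF rt])
        then show ?thesis using A by (meson order_trans)
      qed
      then show "PP V par r var R u Zq" using A unfolding PP_def by blast
    next
      assume "PP V par r var R u Zq"
      then show "vars V par r var u \<subseteq> Zq \<and> \<not> vars V par r var a \<subseteq> Zq"
        using a(2) unfolding PP_def by blast
    qed
    then show ?thesis using eq unfolding Iq_def by auto
  qed
  then show ?thesis using a(1) unfolding EI_lsa_def EI_def by simp
qed

theorem lemma6:
  fixes V :: "'a set" and par :: "'a \<Rightarrow> 'a" and r :: 'a
    and var :: "'a \<Rightarrow> 'x" and Q :: "'q set" and Pr :: "'q \<Rightarrow> real"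
    and Z :: "'q \<Rightarrow> 'x set" and c :: "'a \<Rightarrow> real" and R :: "'a set" and u :: 'a
  assumes "rooted_tree V par r"
    and "finite Q" and "\<forall>q\<in>Q. Pr q \<ge> 0" and "(\<Sum>q\<in>Q. Pr q) = 1"
    and "R \<subseteq> V" and "u \<in> V - R"
  shows "benefit V par r var Q Pr Z c (R \<union> {u}) - benefit V par r var Q Pr Z c R
       = EI_lsa V par r var Q Pr Z u (lsa par r u R)
         * (Ctot V par r c u - (\<Sum>v\<in>hsd V par r u R. Ctot V par r c v))"
proof -
  note rt = assms(1)
  have u: "u \<in> V" "u \<notin> R" using assms(6) by auto
  have finR: "finite R" using assms(5) rt unfolding rooted_tree_def using finite_subset by blast
  let ?S = "R \<union> {u}"
  let ?E = "\<Sum>q\<in>Q. Pr q * (if PP V par r var R u (Z q) then 1 else 0)"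
  let ?EI = "EI V par r var Q Pr Z"
  let ?C = "Ctot V par r c"
  let ?H = "hsd V par r u R"
  have Eu: "?EI u ?S = ?E" unfolding EI_def
  proof (rule sum.cong[OF refl])
    fix q
    show "Pr q * Iq V par r var (Z q) u ?S = Pr q * (if PP V par r var R u (Z q) then 1 else 0)"
      by (simp only: Iq_u[OF rt u])
  qed
  have Ew: "?EI w ?S - ?EI w R = - (if w \<in> ?H then ?E else 0)" if w: "w \<in> R" for w
  proof -
    have "?EI w ?S - ?EI w R = (\<Sum>q\<in>Q. Pr q * (Iq V par r var (Z q) w ?S - Iq V par r var (Z q) w R))"
      by (simp only: EI_def right_diff_distrib sum_subtractf)
    also have "\<dots> = (\<Sum>q\<in>Q. - (Pr q * (if PP V par r var R u (Z q) \<and> w \<in> ?H then 1 else 0)))"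
      by (rule sum.cong[OF refl]) (simp only: Iq_w[OF rt assms(5) u w] mult_minus_right)
    also have "\<dots> = - (if w \<in> ?H then ?E else 0)"
      by (simp add: sum_negf)
    finally show ?thesis .
  qed
  have HR: "?H \<subseteq> R" unfolding hsd_def by blast
  have "benefit V par r var Q Pr Z c ?S = (\<Sum>w\<in>R. ?EI w ?S * ?C w) + ?EI u ?S * ?C u"
    unfolding benefit_def using finR u by simp
  moreover have "benefit V par r var Q Pr Z c R = (\<Sum>w\<in>R. ?EI w R * ?C w)"
    unfolding benefit_def by simp
  ultimately have "benefit V par r var Q Pr Z c ?S - benefit V par r var Q Pr Z c R
      = (\<Sum>w\<in>R. (?EI w ?S - ?EI w R) * ?C w) + ?E * ?C u"
    using Eu by (simp add: sum_subtractf left_diff_distrib)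
  also have "(\<Sum>w\<in>R. (?EI w ?S - ?EI w R) * ?C w) = (\<Sum>w\<in>R. - (if w \<in> ?H then ?E * ?C w else 0))"
    using Ew by (intro sum.cong) auto
  also have "\<dots> = - (\<Sum>w\<in>R \<inter> ?H. ?E * ?C w)"
    using finR by (simp add: sum_negf sum.inter_restrict)
  also have "R \<inter> ?H = ?H" using HR by blast
  finally have X: "benefit V par r var Q Pr Z c ?S - benefit V par r var Q Pr Z c R
      = ?E * ?C u - (\<Sum>w\<in>?H. ?E * ?C w)" by simp
  show ?thesis unfolding EI_lsa_eq[OF rt assms(5) u, of var Q Pr Z] X
    by (simp add: sum_distrib_left right_diff_distrib)
qed

end
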